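(* Let $(G_k)_{k\in\mathbb Z}$ be a gibonacci sequence, let $\lambda = G_1^2 - G_0G_2$, and let $F_k$ denote the Fibonacci numbers. For every positive integer $n$ and all integers $t$ and $m$, \begin{equation*} \begin{split} &220\sum_{j = 1}^n G_{j + t - 1} G_{j + t} G_{j + t + 1} G_{j + t + 2} G_{j + t + m}\\ &\quad = \left(F_{m + 2} + F_{m - 3}\right)\Big(-\left(G_{n + t + 3}^5 - G_{t + 3}^5\right) + 7\left(G_{n + t + 2}^5 - G_{t + 2}^5\right) + 47\left(G_{n + t + 1}^5 - G_{t + 1}^5\right)\\ &\qquad\qquad + 31\left(G_{n + t}^5 - G_t^5\right) - 9\left(G_{n + t - 1}^5 - G_{t - 1}^5\right) - \left(G_{n + t - 2}^5 - G_{t - 2}^5\right)\Big)\\ &\qquad - 44\lambda^2\left(F_{m + 2} + F_{m - 3}\right)\left(G_{n + t + 2} - G_{t + 2}\right) - 44F_{m + 2}\left(G_{t + 1}^5 - \lambda^2 G_{t + 1}\right) + 44F_{m + 2}\left(G_{n + t + 1}^5 - \lambda^2 G_{n + t + 1}\right) \end{split} \end{equation*} and \begin{equation*} \begin{split} &220\sum_{j = 1}^n (-1)^{j - 1}G_{j + t - 1} G_{j + t} G_{j + t + 1} G_{j + t + 2} G_{j + t + m}\\ &\quad = -\left(F_{m + 2} - F_{m - 3}\right)\Big(-\left((-1)^{n + 1}G_{n + t + 3}^5 + G_{t + 3}^5\right) + 9\left((-1)^{n + 1}G_{n + t + 2}^5 + G_{t + 2}^5\right)\\ &\qquad\qquad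 + 31\left((-1)^{n + 1}G_{n + t + 1}^5 + G_{t + 1}^5\right) - 47\left((-1)^{n + 1}G_{n + t}^5 + G_t^5\right)\\ &\qquad\qquad + 7\left((-1)^{n + 1}G_{n + t - 1}^5 + G_{t - 1}^5\right) + \left((-1)^{n + 1}G_{n + t - 2}^5 + G_{t - 2}^5\right)\Big)\\ &\qquad + 44\lambda^2\left(F_{m + 2} - F_{m - 3}\right)\left((-1)^{n + 1}G_{n + t - 1} + G_{t - 1}\right) + 44F_{m + 2}\left(G_{t + 1}^5 - \lambda^2 G_{t + 1}\right)\\ &\qquad + 44F_{m + 2}(-1)^{n + 1}\left(G_{n + t + 1}^5 - \lambda^2 G_{n + t + 1}\right). \end{split} \end{equation*}
   Context: A gibonacci sequence $(G_k)_{k\in\mathbb Z}$ is defined by arbitrary initial values $G_0=a$, $G_1=b$ (numbers, not both zero) and $G_k=G_{k-1}+G_{k-2}$ for all integers $k$. The Fibonacci numbers $F_k$ are the gibonacci sequence with $F_0=0$, $F_1=1$, extended to all integer indices by the same recurrence (so $F_{-k}=(-1)^{k+1}F_k$). *)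

theory Defs
  imports Complex_Main "HOL-Number_Theory.Fib"
begin

definition fibz :: "int \<Rightarrow> int" where
  "fibz k = (if 0 \<le> k then int (fib (nat k))
             else (-1) ^ (nat (-k) + 1) * int (fib (nat (-k))))"

definition gibonacci :: "(int \<Rightarrow> complex) \<Rightarrow> bool" where
  "gibonacci G \<longleftrightarrow> (G 0 \<noteq> 0 \<or> G 1 \<noteq> 0) \<and> (\<forall>k. G k = G (k - 1) + G (k - 2))"

end

theory Submission
  imports Defs
begin

lemma int_two_sided_eq:
  fixes f g :: "int \<Rightarrow> 'a::comm_ring_1"
  assumes rf: "\<And>k. f (k + 2) = f (k + 1) + f k"
      and rg: "\<And>k. g (k + 2) = g (k + 1) + g k"
      and h0: "f 0 = g 0" and h1: "f 1 = g 1"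
  shows "f k = g k"
proof -
  have up: "f (int n) = g (int n) \<and> f (int n + 1) = g (int n + 1)" for n
  proof (induction n)
    case 0 then show ?case using h0 h1 by simp
  next
    case (Suc n)
    have "f (int n + 2) = g (int n + 2)" using rf[of "int n"] rg[of "int n"] Suc by simp
    then show ?case using Suc by (simp add: algebra_simps)
  qed
  have down: "f (- int n) = g (- int n) \<and> f (- int n + 1) = g (- int n + 1)" for n
  proof (induction n)
    case 0 then show ?case using h0 h1 by simp
  next
    case (Suc n)
    have e1: "f (- int (Suc n)) = f (- int n + 1) - f (- int n)"
      using rf[of "- int (Suc n)"] by (simp add: algebra_simps)
    have e2: "g (- int (Suc n)) = g (- int n + 1) - g (- int n)"
      using rg[of "- int (Suc n)"] by (simp add: algebra_simps)
    have "- int (Suc n) + 1 = - int n" by simp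
    then show ?case using Suc e1 e2 by simp
  qed
  show ?thesis
  proof (cases "k \<ge> 0")
    case True then show ?thesis using up[of "nat k"] by simp
  next
    case False then show ?thesis using down[of "nat (-k)"] by simp
  qed
qed

lemma fibz_neg: "fibz (- int j) = (-1)^(j+1) * int (fib j)"
  by (cases j) (simp_all add: fibz_def del: of_nat_Suc)

lemma fibz_rec: "fibz (k + 2) = fibz (k + 1) + fibz k"
proof (cases "k \<ge> 0")
  case True
  then have "nat (k+2) = Suc (Suc (nat k))" "nat (k+1) = Suc (nat k)" by auto
  then show ?thesis using True by (simp add: fibz_def)
next
  case False
  show ?thesis
  proof (cases "k = -1")
    case True then show ?thesis by (simp add: fibz_def)
  next
    case False2: False
    define j where "j = nat (- k - 2)"
    have j: "k = - int j - 2" using False False2 unfolding j_def by simp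
    have a: "k + 2 = - int j" "k + 1 = - int (Suc j)" "k = - int (Suc (Suc j))" using j by auto
    have eq: "fibz (- int j) = fibz (- int (Suc j)) + fibz (- int (Suc (Suc j)))"
      unfolding fibz_neg by (simp add: algebra_simps)
    show ?thesis unfolding a(1) a(2) unfolding a(3) by (rule eq)
  qed
qed

lemma gib_rec: "gibonacci G \<Longrightarrow> G (k + 2) = G (k + 1) + G k"
  unfolding gibonacci_def by (metis add_diff_cancel_right' diff_add_eq add_diff_eq
     one_add_one add_diff_cancel_left' diff_diff_eq)

lemma gib_lin:
  assumes "gibonacci G"
  shows "G (s + k) = of_int (fibz (k - 1)) * G s + of_int (fibz k) * G (s + 1)"
proof -
  show ?thesis
  proof (rule int_two_sided_eq[where f="\<lambda>k. G (s + k)" and g="\<lambda>k. of_int (fibz (k - 1)) * G s + of_int (fibz k) * G (s + 1)"])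
    fix k
    show "G (s + (k + 2)) = G (s + (k + 1)) + G (s + k)"
      using gib_rec[OF assms, of "s + k"] by (simp add: algebra_simps)
    have ck: "k - 1 + 2 = k + 1" "k - 1 + 1 = k" by simp_all
    have "fibz (k + 1) = fibz k + fibz (k - 1)" using fibz_rec[of "k - 1"] unfolding ck .
    then show "of_int (fibz (k + 2 - 1)) * G s + of_int (fibz (k + 2)) * G (s + 1) =
          (of_int (fibz (k + 1 - 1)) * G s + of_int (fibz (k + 1)) * G (s + 1)) +
          (of_int (fibz (k - 1)) * G s + of_int (fibz k) * G (s + 1))"
      using fibz_rec[of k] by (simp add: algebra_simps)
  next
    show "G (s + 0) = of_int (fibz (0 - 1)) * G s + of_int (fibz 0) * G (s + 1)"
      by (simp add: fibz_def)
    show "G (s + 1) = of_int (fibz (1 - 1)) * G s + of_int (fibz 1) * G (s + 1)"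
      by (simp add: fibz_def)
  qed
qed

lemma shift_const:
  fixes h :: "int \<Rightarrow> 'a"
  assumes "\<And>k. h (k + 1) = h k"
  shows "h k = h 0"
proof -
  have up: "h (int n) = h 0" for n
  proof (induction n)
    case 0 then show ?case by simp
  next
    case (Suc n)
    have "h (int n + 1) = h (int n)" by (rule assms)
    then show ?case using Suc by (metis of_nat_Suc add.commute)
  qed
  have down: "h (- int n) = h 0" for n
  proof (induction n)
    case 0 then show ?case by simp
  next
    case (Suc n)
    have "h (- int (Suc n) + 1) = h (- int (Suc n))" by (rule assms)
    then show ?case using Suc by simp
  qed
  show ?thesis
    by (cases "k \<ge> 0") (use up[of "nat k"] down[of "nat (-k)"] in auto)
qed

lemma gib_lam:
  assumes "gibonacci G"
  shows "(G (k + 1)^2 - G k * G (k + 2))^2 = ((G 1)^2 - G 0 * G 2)^2"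
proof -
  let ?h = "\<lambda>k. (G (k + 1)^2 - G k * G (k + 2))^2"
  have "?h (k + 1) = ?h k" for k
  proof -
    have a: "G (k + 2) = G (k + 1) + G k" using gib_rec[OF assms] by simp
    have c: "k + 1 + 1 = k + 2" "k + 1 + 2 = k + 3" by simp_all
    have b: "G (k + 3) = G (k + 2) + G (k + 1)" using gib_rec[OF assms, of "k + 1"] unfolding c .
    show ?thesis unfolding b c a by algebra
  qed
  then have "?h k = ?h 0" by (rule shift_const)
  then show ?thesis by simp
qed

lemma main_lemma:
  fixes G :: "int \<Rightarrow> complex" and n :: nat and t m :: int
  assumes gib: "gibonacci G"
  defines "lam \<equiv> (G 1)^2 - G 0 * G 2"
  defines "F \<equiv> (\<lambda>k. of_int (fibz k) :: complex)"
  shows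
  "(220 * (\<Sum>j=1..n. G (int j + t - 1) * G (int j + t) * G (int j + t + 1) * G (int j + t + 2) * G (int j + t + m))
    = (F (m + 2) + F (m - 3)) *
        ( - (G (int n + t + 3)^5 - G (t + 3)^5) + 7 * (G (int n + t + 2)^5 - G (t + 2)^5)
          + 47 * (G (int n + t + 1)^5 - G (t + 1)^5) + 31 * (G (int n + t)^5 - G t ^5)
          - 9 * (G (int n + t - 1)^5 - G (t - 1)^5) - (G (int n + t - 2)^5 - G (t - 2)^5))
      - 44 * lam^2 * (F (m + 2) + F (m - 3)) * (G (int n + t + 2) - G (t + 2))
      - 44 * F (m + 2) * (G (t + 1)^5 - lam^2 * G (t + 1))
      + 44 * F (m + 2) * (G (int n + t + 1)^5 - lam^2 * G (int n + t + 1)))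
   \<and>
   (220 * (\<Sum>j=1..n. (-1)^(j - 1) * G (int j + t - 1) * G (int j + t) * G (int j + t + 1) * G (int j + t + 2) * G (int j + t + m))
    = - (F (m + 2) - F (m - 3)) *
        ( - ((-1)^(n + 1) * G (int n + t + 3)^5 + G (t + 3)^5)
          + 9 * ((-1)^(n + 1) * G (int n + t + 2)^5 + G (t + 2)^5)
          + 31 * ((-1)^(n + 1) * G (int n + t + 1)^5 + G (t + 1)^5)
          - 47 * ((-1)^(n + 1) * G (int n + t)^5 + G t ^5)
          + 7 * ((-1)^(n + 1) * G (int n + t - 1)^5 + G (t - 1)^5)
          + ((-1)^(n + 1) * G (int n + t - 2)^5 + G (t - 2)^5))
      + 44 * lam^2 * (F (m + 2) - F (m - 3)) * ((-1)^(n + 1) * G (int n + t - 1) + G (t - 1))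
      + 44 * F (m + 2) * (G (t + 1)^5 - lam^2 * G (t + 1))
      + 44 * F (m + 2) * (-1)^(n + 1) * (G (int n + t + 1)^5 - lam^2 * G (int n + t + 1)))"
proof (induction n)
  case 0
  show ?case by simp
next
  case (Suc n)
  note IH = Suc
  define s where "s = int n + t"
  define x where "x = G s"
  define y where "y = G (s + 1)"
  define e where "e = (-1::complex)^n"
  define p where "p = F m"
  define q where "q = F (m + 1)"
  have r: "\<And>k. G (k + 2) = G (k + 1) + G k" using gib_rec[OF gib] by simp
  have g2: "G (s + 2) = x + y" using r[of s] by (simp add: x_def y_def)
  have g3: "G (s + 3) = x + 2*y" using r[of "s+1"] g2 by (simp add: y_def add.assoc)
  have g4: "G (s + 4) = 2*x + 3*y" using r[of "s+2"] g2 g3 by (simp add: add.assoc)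
  have c1: "s - 1 + 2 = s + 1" "s - 1 + 1 = s" "s - 2 + 2 = s" "s - 2 + 1 = s - 1" by simp_all
  have gm1: "G (s - 1) = y - x" using r[of "s - 1"] unfolding c1 x_def y_def by simp
  have gm2: "G (s - 2) = 2*x - y" using r[of "s - 2"] gm1 unfolding c1 x_def by simp
  have gmm: "G (s + 1 + m) = p * x + q * y"
  proof -
    have cm: "s + (m + 1) = s + 1 + m" "m + 1 - 1 = m" by simp_all
    show ?thesis using gib_lin[OF gib, of s "m + 1"] unfolding cm p_def q_def F_def x_def y_def .
  qed
  have fr: "\<And>k. F (k + 2) = F (k + 1) + F k" unfolding F_def using fibz_rec by simp
  have f2: "F (m + 2) = p + q" using fr[of m] by (simp add: p_def q_def)
  have cf: "m - 1 + 2 = m + 1" "m - 1 + 1 = m" "m - 2 + 2 = m" "m - 2 + 1 = m - 1"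
    "m - 3 + 2 = m - 1" "m - 3 + 1 = m - 2" by simp_all
  have fm1: "F (m - 1) = q - p" using fr[of "m - 1"] unfolding cf p_def q_def by simp
  have fm2: "F (m - 2) = 2*p - q" using fr[of "m - 2"] fm1 unfolding cf p_def by simp
  have f3: "F (m - 3) = 2*q - 3*p" using fr[of "m - 3"] fm1 fm2 unfolding cf by simp
  have L: "lam^2 = (y^2 - x * (x + y))^2"
    using gib_lam[OF gib, of s] g2 unfolding lam_def x_def y_def by simp
  have n3: "G (int n + t + 3) = x + 2*y" using g3 by (simp add: s_def)
  have n2: "G (int n + t + 2) = x + y" using g2 by (simp add: s_def)
  have n1: "G (int n + t + 1) = y" by (simp add: s_def y_def)
  have n0: "G (int n + t) = x" by (simp add: s_def x_def)
  have nm1: "G (int n + t - 1) = y - x" using gm1 by (simp add: s_def)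
  have nm2: "G (int n + t - 2) = 2*x - y" using gm2 by (simp add: s_def)
  have s3: "G (int (Suc n) + t + 3) = 2*x + 3*y" using g4 by (simp add: s_def algebra_simps)
  have s2: "G (int (Suc n) + t + 2) = x + 2*y" using g3 by (simp add: s_def algebra_simps)
  have s1: "G (int (Suc n) + t + 1) = x + y" using g2 by (simp add: s_def algebra_simps)
  have s0: "G (int (Suc n) + t) = y" by (simp add: s_def y_def algebra_simps)
  have sm1: "G (int (Suc n) + t - 1) = x" by (simp add: s_def x_def algebra_simps)
  have sm2: "G (int (Suc n) + t - 2) = y - x" using gm1 by (simp add: s_def algebra_simps)
  have e1: "(-1::complex)^(n+1) = - e" by (simp add: e_def)
  have e2: "(-1::complex)^(Suc n + 1) = e" by (simp add: e_def)
  have sum1: "(\<Sum>j=1..Suc n. G (int j + t - 1) * G (int j + t) * G (int j + t + 1) * G (int j + t + 2) * G (int j + t + m))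
     = (\<Sum>j=1..n. G (int j + t - 1) * G (int j + t) * G (int j + t + 1) * G (int j + t + 2) * G (int j + t + m))
       + x * y * (x + y) * (x + 2*y) * (p * x + q * y)"
    using sm1 s0 s1 s2 gmm by (simp add: s_def algebra_simps)
  have sum2: "(\<Sum>j=1..Suc n. (-1)^(j - 1) * G (int j + t - 1) * G (int j + t) * G (int j + t + 1) * G (int j + t + 2) * G (int j + t + m))
     = (\<Sum>j=1..n. (-1)^(j - 1) * G (int j + t - 1) * G (int j + t) * G (int j + t + 1) * G (int j + t + 2) * G (int j + t + m))
       + e * (x * y * (x + y) * (x + 2*y) * (p * x + q * y))"
    using sm1 s0 s1 s2 gmm by (simp add: s_def e_def algebra_simps)
  have IH1: "220 * (\<Sum>j=1..n. G (int j + t - 1) * G (int j + t) * G (int j + t + 1) * G (int j + t + 2) * G (int j + t + m))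
    = (p + q + (2*q - 3*p)) *
        ( - ((x + 2*y)^5 - G (t + 3)^5) + 7 * ((x + y)^5 - G (t + 2)^5)
          + 47 * (y^5 - G (t + 1)^5) + 31 * (x^5 - G t ^5)
          - 9 * ((y - x)^5 - G (t - 1)^5) - ((2*x - y)^5 - G (t - 2)^5))
      - 44 * (y^2 - x * (x + y))^2 * (p + q + (2*q - 3*p)) * ((x + y) - G (t + 2))
      - 44 * (p + q) * (G (t + 1)^5 - (y^2 - x * (x + y))^2 * G (t + 1))
      + 44 * (p + q) * (y^5 - (y^2 - x * (x + y))^2 * y)"
    using IH unfolding n3 n2 n1 n0 nm1 nm2 f2 f3 L by simp
  have IH2: "220 * (\<Sum>j=1..n. (-1)^(j - 1) * G (int j + t - 1) * G (int j + t) * G (int j + t + 1) * G (int j + t + 2) * G (int j + t + m))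
    = - (p + q - (2*q - 3*p)) *
        ( - ((- e) * (x + 2*y)^5 + G (t + 3)^5)
          + 9 * ((- e) * (x + y)^5 + G (t + 2)^5)
          + 31 * ((- e) * y^5 + G (t + 1)^5)
          - 47 * ((- e) * x^5 + G t ^5)
          + 7 * ((- e) * (y - x)^5 + G (t - 1)^5)
          + ((- e) * (2*x - y)^5 + G (t - 2)^5))
      + 44 * (y^2 - x * (x + y))^2 * (p + q - (2*q - 3*p)) * ((- e) * (y - x) + G (t - 1))
      + 44 * (p + q) * (G (t + 1)^5 - (y^2 - x * (x + y))^2 * G (t + 1))
      + 44 * (p + q) * (- e) * (y^5 - (y^2 - x * (x + y))^2 * y)"
    using IH unfolding n3 n2 n1 n0 nm1 nm2 f2 f3 L e1 by simp
  show ?case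
    unfolding sum1 sum2 s3 s2 s1 s0 sm1 sm2 f2 f3 L e2 distrib_left[of 220] IH1 IH2
    by algebra
qed

theorem theorem1:
  fixes G :: "int \<Rightarrow> complex" and n :: nat and t m :: int
  assumes "gibonacci G" and "n \<ge> 1"
  defines "lam \<equiv> (G 1)^2 - G 0 * G 2"
  defines "F \<equiv> (\<lambda>k. of_int (fibz k) :: complex)"
  defines "N \<equiv> int n"
  shows
  "(220 * (\<Sum>j=1..n. G (int j + t - 1) * G (int j + t) * G (int j + t + 1) * G (int j + t + 2) * G (int j + t + m))
    = (F (m + 2) + F (m - 3)) *
        ( - (G (N + t + 3)^5 - G (t + 3)^5) + 7 * (G (N + t + 2)^5 - G (t + 2)^5)
          + 47 * (G (N + t + 1)^5 - G (t + 1)^5) + 31 * (G (N + t)^5 - G t ^5)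
          - 9 * (G (N + t - 1)^5 - G (t - 1)^5) - (G (N + t - 2)^5 - G (t - 2)^5))
      - 44 * lam^2 * (F (m + 2) + F (m - 3)) * (G (N + t + 2) - G (t + 2))
      - 44 * F (m + 2) * (G (t + 1)^5 - lam^2 * G (t + 1))
      + 44 * F (m + 2) * (G (N + t + 1)^5 - lam^2 * G (N + t + 1)))
   \<and>
   (220 * (\<Sum>j=1..n. (-1)^(j - 1) * G (int j + t - 1) * G (int j + t) * G (int j + t + 1) * G (int j + t + 2) * G (int j + t + m))
    = - (F (m + 2) - F (m - 3)) *
        ( - ((-1)^(n + 1) * G (N + t + 3)^5 + G (t + 3)^5)
          + 9 * ((-1)^(n + 1) * G (N + t + 2)^5 + G (t + 2)^5)
          + 31 * ((-1)^(n + 1) * G (N + t + 1)^5 + G (t + 1)^5)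
          - 47 * ((-1)^(n + 1) * G (N + t)^5 + G t ^5)
          + 7 * ((-1)^(n + 1) * G (N + t - 1)^5 + G (t - 1)^5)
          + ((-1)^(n + 1) * G (N + t - 2)^5 + G (t - 2)^5))
      + 44 * lam^2 * (F (m + 2) - F (m - 3)) * ((-1)^(n + 1) * G (N + t - 1) + G (t - 1))
      + 44 * F (m + 2) * (G (t + 1)^5 - lam^2 * G (t + 1))
      + 44 * F (m + 2) * (-1)^(n + 1) * (G (N + t + 1)^5 - lam^2 * G (N + t + 1)))"
  using main_lemma[OF assms(1)] unfolding lam_def F_def N_def by simp

end
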